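(* Let $R>0$, and let $M\subset\mathbb{R}^d$ be measurable with $\|x\|\le R$ for all $x\in M$. Let $\Phi:\mathbb{R}^d\to S^d$ be given by $\Phi(x_1,\dots,x_d)=(x_1,\dots,x_d,1)/\|(x_1,\dots,x_d,1)\|$. Then $V(\Phi(M))\ge(R+1)^{-(d+1)}\,V(M)$.
   Context: $S^d$ is the unit sphere in $\mathbb{R}^{d+1}$. $V(\Phi(M))$ denotes the $d$-dimensional surface measure on $S^d$, and $V(M)$ denotes the $d$-dimensional Lebesgue measure. *)

theory Defs
  imports "HOL-Analysis.Analysis"
begin

text \<open>Surface measure on the unit sphere of a Euclidean space 'b of dimension n+1,
  defined through the cone construction:
  sigma(A) = (n+1) * Lebesgue measure of {t x | 0 < t <= 1, x in A}.
  This is the standard (normalised as usual) d-dimensional surface measure on S^d.\<close>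

definition sphere_cone :: "'b::euclidean_space set \<Rightarrow> 'b set" where
  "sphere_cone A = {t *\<^sub>R x | t x. 0 < t \<and> t \<le> 1 \<and> x \<in> A}"

definition sphere_surface_measure :: "'b::euclidean_space set \<Rightarrow> real" where
  "sphere_surface_measure A =
     real DIM('b) * measure lebesgue (sphere_cone (A \<inter> sphere 0 1))"

definition Phi :: "'a::euclidean_space \<Rightarrow> 'a \<times> real" where
  "Phi x = (1 / norm (x, 1::real)) *\<^sub>R (x, 1)"

end

theory Submission imports Defs begin

lemma scale_lborel:
  fixes S :: "'a::euclidean_space set"
  assumes S: "S \<in> sets borel" and s: "s > 0"
  shows "emeasure lborel {y. (1/s) *\<^sub>R y \<in> S} = ennreal (s ^ DIM('a)) * emeasure lborel S"
proof -
  have c: "(1/s) \<noteq> 0" using s by simp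
  have "emeasure lborel S = emeasure (density (distr lborel borel (\<lambda>x. 0 + (1/s) *\<^sub>R x)) (\<lambda>_. \<bar>1/s\<bar>^DIM('a))) S"
    by (subst lborel_affine[OF c, of 0]) simp
  also have "\<dots> = ennreal ((1/s)^DIM('a)) * emeasure (distr lborel borel (\<lambda>x. 0 + (1/s) *\<^sub>R x)) S"
    using S s by (simp add: emeasure_density nn_integral_cmult_indicator)
  also have "\<dots> = ennreal ((1/s)^DIM('a)) * emeasure lborel {y. (1/s) *\<^sub>R y \<in> S}"
    using S by (subst emeasure_distr) (auto simp: vimage_def)
  finally have "ennreal (s ^ DIM('a)) * emeasure lborel S = ennreal (s ^ DIM('a)) * ennreal ((1/s)^DIM('a)) * emeasure lborel {y. (1/s) *\<^sub>R y \<in> S}"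
    by (simp add: mult.assoc)
  also have "ennreal (s ^ DIM('a)) * ennreal ((1/s)^DIM('a)) = 1"
    using s by (simp add: ennreal_mult'[symmetric] power_mult_distrib[symmetric] power_one_over)
  finally show ?thesis by simp
qed

definition kone0 :: "'a::euclidean_space set \<Rightarrow> real \<Rightarrow> ('a \<times> real) set" where
  "kone0 X a = {p. 0 < snd p \<and> snd p \<le> a \<and> (1/snd p) *\<^sub>R fst p \<in> X}"

lemma kone0_borel: "X \<in> sets borel \<Longrightarrow> kone0 X a \<in> sets borel"
proof -
  assume X: "X \<in> sets borel"
  have e: "kone0 X a = (\<lambda>p. (1/snd p) *\<^sub>R fst p) -` X \<inter> {p. 0 < snd p \<and> snd p \<le> a}"
    by (auto simp: kone0_def)
  have f: "fst \<in> borel_measurable (borel::('a\<times>real) measure)"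
    by (rule borel_measurable_continuous_onI) (intro continuous_intros)
  have g: "snd \<in> borel_measurable (borel::('a\<times>real) measure)"
    by (rule borel_measurable_continuous_onI) (intro continuous_intros)
  have "(\<lambda>p. (1/snd p) *\<^sub>R fst p) \<in> borel_measurable (borel::('a\<times>real) measure)"
    using f g by measurable
  moreover have "{p::'a\<times>real. 0 < snd p \<and> snd p \<le> a} \<in> sets borel"
    using g by measurable
  ultimately have "(\<lambda>p. (1/snd p) *\<^sub>R fst p) -` X \<inter> {p. 0 < snd p \<and> snd p \<le> a} \<in> sets borel"
    using X by (intro sets.Int measurable_sets_borel) auto
  then show ?thesis using e by simp
qed

lemma power_int: "a > 0 \<Longrightarrow> ((\<lambda>s::real. s ^ n) has_integral (a^(n+1)/(n+1))) {0..a}"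
proof -
  assume a: "a > 0"
  have "((\<lambda>s::real. s ^ n) has_integral ((\<lambda>s. s^(n+1)/(n+1)) a - (\<lambda>s. s^(n+1)/(n+1)) 0)) {0..a}"
    apply (rule fundamental_theorem_of_calculus)
    using a apply simp
    using a
  proof -
    fix x :: real assume "x \<in> {0..a}"
    have "((\<lambda>s. s^(n+1)/(n+1)) has_real_derivative x^n) (at x within {0..a})"
      using DERIV_cdivide[OF DERIV_pow[of "n+1" x "{0..a}"], of "real (n+1)"] by simp
    then show "((\<lambda>s. s^(n+1)/(n+1)) has_vector_derivative x^n) (at x within {0..a})"
      by (simp add: has_real_derivative_iff_has_vector_derivative)
  qed
  then show ?thesis by (simp add: add.commute)
qed

lemma slice_int:
  fixes X :: "'a::euclidean_space set"
  assumes X: "X \<in> sets borel" and a: "a > 0"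
  shows "emeasure lborel (kone0 X a) = emeasure lborel X * ennreal (a^(DIM('a)+1)/(DIM('a)+1))"
proof -
  have P: "pair_sigma_finite (lborel::'a measure) (lborel::real measure)"
    by (intro pair_sigma_finite.intro) unfold_locales
  have A: "kone0 X a \<in> sets (lborel \<Otimes>\<^sub>M lborel)"
    using kone0_borel[OF X] by (simp only: lborel_prod sets_lborel)
  have "emeasure lborel (kone0 X a) = emeasure (lborel \<Otimes>\<^sub>M lborel) (kone0 X a)"
    by (simp add: lborel_prod)
  also have "\<dots> = (\<integral>\<^sup>+s. emeasure lborel ((\<lambda>y. (y, s)) -` kone0 X a) \<partial>lborel)"
    by (rule pair_sigma_finite.emeasure_pair_measure_alt2[OF P A])
  also have "\<dots> = (\<integral>\<^sup>+s. emeasure lborel X * (ennreal (s ^ DIM('a)) * indicator {0..a} s) \<partial>lborel)"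
  proof (rule nn_integral_cong)
    fix s :: real
    show "emeasure lborel ((\<lambda>y. (y, s)) -` kone0 X a) = emeasure lborel X * (ennreal (s ^ DIM('a)) * indicator {0..a} s)"
    proof (cases "0 < s \<and> s \<le> a")
      case True
      then have "(\<lambda>y. (y, s)) -` kone0 X a = {y. (1/s) *\<^sub>R y \<in> X}" by (auto simp: kone0_def)
      then show ?thesis using True scale_lborel[OF X, of s] by (simp add: mult.commute)
    next
      case False
      then have "(\<lambda>y. (y, s)) -` kone0 X a = {}" by (auto simp: kone0_def)
      moreover have "ennreal (s ^ DIM('a)) * indicator {0..a} s = 0"
        using False by (cases "s = 0") (auto simp: indicator_def)
      ultimately show ?thesis by simp
    qed
  qed
  also have "\<dots> = emeasure lborel X * (\<integral>\<^sup>+s. ennreal (s ^ DIM('a)) * indicator {0..a} s \<partial>lborel)"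
    by (rule nn_integral_cmult) simp
  also have "(\<integral>\<^sup>+s. ennreal (s ^ DIM('a)) * indicator {0..a} s \<partial>lborel) = ennreal (a^(DIM('a)+1)/(DIM('a)+1))"
    by (rule nn_integral_has_integral_lebesgue') (use power_int[OF a, of "DIM('a)"] in \<open>auto simp: add.commute\<close>)
  finally show ?thesis .
qed


definition kone :: "'a::euclidean_space set \<Rightarrow> ('a \<times> real) set" where
  "kone X = {p. 0 < snd p \<and> norm p \<le> 1 \<and> (1/snd p) *\<^sub>R fst p \<in> X}"

lemma norm_Phi: "norm (Phi x) = 1"
proof -
  have "norm (x, 1::real) \<noteq> 0" by (simp add: zero_prod_def)
  moreover have "norm (Phi x) = \<bar>1 / norm (x, 1::real)\<bar> * norm (x, 1::real)"
    unfolding Phi_def by (rule norm_scaleR)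
  ultimately show ?thesis by simp
qed

lemma sphere_cone_eq: "sphere_cone (Phi ` M \<inter> sphere 0 1) = kone M"
proof
  show "sphere_cone (Phi ` M \<inter> sphere 0 1) \<subseteq> kone M"
  proof
    fix p assume "p \<in> sphere_cone (Phi ` M \<inter> sphere 0 1)"
    then obtain t x where t: "0 < t" "t \<le> 1" and x: "x \<in> M" and p: "p = t *\<^sub>R Phi x"
      unfolding sphere_cone_def by blast
    define n where "n = norm (x, 1::real)"
    have n: "n > 0" by (simp add: n_def zero_prod_def)
    have ps: "snd p = t / n" and pf: "fst p = (t / n) *\<^sub>R x"
      by (simp_all add: p Phi_def n_def)
    have "norm p = t" using t by (simp add: p norm_Phi)
    moreover have "(1 / snd p) *\<^sub>R fst p = x" using n t by (simp add: ps pf)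
    ultimately show "p \<in> kone M" using t n x by (simp add: kone_def ps)
  qed
next
  show "kone M \<subseteq> sphere_cone (Phi ` M \<inter> sphere 0 1)"
  proof
    fix p :: "'a \<times> real" assume "p \<in> kone M"
    then have s: "0 < snd p" and np: "norm p \<le> 1" and xM: "(1/snd p) *\<^sub>R fst p \<in> M"
      by (auto simp: kone_def)
    obtain y s where pys: "p = (y, s)" by (cases p)
    define x where "x = (1/s) *\<^sub>R y"
    have s0: "s > 0" using s pys by simp
    have xp: "(x, 1::real) = (1/s) *\<^sub>R p" using s0 by (simp add: pys x_def)
    have p0: "norm p > 0" using s0 pys by (auto simp: zero_prod_def)
    have nx: "norm (x, 1::real) = norm p / s" using s0 by (simp add: xp)
    have "norm p *\<^sub>R Phi x = p"
      using s0 p0 by (simp add: Phi_def nx xp)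
    moreover have "x \<in> M" using xM pys by (simp add: x_def)
    ultimately show "p \<in> sphere_cone (Phi ` M \<inter> sphere 0 1)"
    proof -
      assume a: "norm p *\<^sub>R Phi x = p" "x \<in> M"
      have "Phi x \<in> Phi ` M \<inter> sphere 0 1" using a norm_Phi[of x] by simp
      then show ?thesis unfolding sphere_cone_def using a p0 np by (metis (mono_tags, lifting) mem_Collect_eq)
    qed
  qed
qed


lemma snd_le1: "norm (x::'a::euclidean_space, y::real) \<le> 1 \<Longrightarrow> y \<le> 1"
  using norm_snd_le[of y x] by (simp add: real_norm_def)

lemma snd_le1': "norm (p::'a::euclidean_space \<times> real) \<le> 1 \<Longrightarrow> snd p \<le> 1"
proof -
  assume a: "norm p \<le> 1"
  have "norm (snd p) \<le> norm (fst p, snd p)" by (rule norm_snd_le)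
  then have "\<bar>snd p\<bar> \<le> 1" using a by simp
  then show ?thesis by simp
qed

theorem lemma3p7:
  fixes M :: "'a::euclidean_space set" and R :: real
  assumes "R > 0"
    and "M \<in> sets lebesgue"
    and "\<And>x. x \<in> M \<Longrightarrow> norm x \<le> R"
  shows "sphere_surface_measure (Phi ` M)
           \<ge> (R + 1) powi (- int (DIM('a) + 1)) * measure lebesgue M"
proof -
  note R = assms(1) and Mb = assms(3)
  obtain S N N' where MSN: "M = S \<union> N" and NN': "N \<subseteq> N'" and N'0: "N' \<in> null_sets lborel"
    and S: "S \<in> sets lborel"
    using assms(2) by (rule sets_completionE)
  have Sb: "S \<in> sets borel" using S by simp
  have N'b: "N' \<in> sets borel" using N'0 by (simp add: null_sets_def)
  define a where "a = 1 / (R + 1)"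
  have a: "a > 0" using R by (simp add: a_def)
  have conesplit: "kone M = kone S \<union> kone N" by (auto simp: kone_def MSN)
  have coneS: "kone S = kone0 S 1 \<inter> cball 0 1"
  proof (rule set_eqI)
    fix p :: "'a \<times> real"
    show "p \<in> kone S \<longleftrightarrow> p \<in> kone0 S 1 \<inter> cball 0 1"
      unfolding kone_def kone0_def mem_Collect_eq Int_iff mem_cball_0 using snd_le1'[of p] by blast
  qed
  have coneSb: "kone S \<in> sets borel"
    unfolding coneS by (intro sets.Int kone0_borel Sb) auto
  have "emeasure lborel (kone0 N' 1) = 0"
    using slice_int[OF N'b, of 1] N'0 by (simp add: null_sets_def)
  then have "kone0 N' 1 \<in> null_sets lborel" using kone0_borel[OF N'b] by (simp add: null_sets_def)
  moreover have "kone N \<subseteq> kone0 N' 1" using NN'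
    unfolding kone_def kone0_def using snd_le1' by blast
  ultimately have coneN: "kone N \<in> null_sets lebesgue"
    by (meson null_sets_completionI null_sets_completion_subset)
  have coneSl: "kone S \<in> sets lebesgue"
    by (rule sets_completionI_sets) (simp add: coneSb)
  have coneM: "kone M \<in> sets lebesgue"
    unfolding conesplit by (rule sets.Un[OF coneSl null_setsD2[OF coneN]])
  have "emeasure lebesgue (kone M) = emeasure lebesgue (kone S)"
    unfolding conesplit by (rule emeasure_Un_null_set[OF coneSl coneN])
  also have "\<dots> = emeasure lborel (kone S)"
    by (subst emeasure_completion[OF coneSl]) (simp add: coneSb)
  finally have em: "emeasure lebesgue (kone M) = emeasure lborel (kone S)" .
  have Nl: "N \<in> null_sets lebesgue" using NN' N'0
    by (meson null_sets_completionI null_sets_completion_subset)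
  have Sl: "S \<in> sets lebesgue" using S by (rule sets_completionI_sets)
  have "emeasure lebesgue M = emeasure lebesgue S"
    unfolding MSN by (rule emeasure_Un_null_set[OF Sl Nl])
  also have "\<dots> = emeasure lborel S"
    by (simp only: emeasure_completion[OF Sl] main_part[OF S])
  finally have eM: "emeasure lebesgue M = emeasure lborel S" .
  have sub: "kone0 S a \<subseteq> kone S"
  proof
    fix p :: "'a \<times> real" assume p: "p \<in> kone0 S a"
    obtain y s where pys: "p = (y, s)" by (cases p)
    have s: "0 < s" "s \<le> a" and xS: "(1/s) *\<^sub>R y \<in> S" using p pys by (auto simp: kone0_def)
    define x where "x = (1/s) *\<^sub>R y"
    have "x \<in> M" using xS MSN x_def by blast
    then have "norm x \<le> R" by (rule Mb)
    have yx: "y = s *\<^sub>R x" using s by (simp add: x_def)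
    have "p = s *\<^sub>R (x, 1)" by (simp add: pys yx)
    then have "norm p = \<bar>s\<bar> * norm (x, 1::real)" by (simp only: norm_scaleR)
    then have "norm p = s * norm (x, 1::real)" using s by simp
    also have "\<dots> \<le> s * (norm x + 1)"
      using s norm_Pair_le[of x "1::real"] by (intro mult_left_mono) auto
    also have "\<dots> \<le> a * (R + 1)"
      using s \<open>norm x \<le> R\<close> by (intro mult_mono) auto
    also have "\<dots> = 1" using R by (simp add: a_def)
    finally show "p \<in> kone S" using s xS pys by (simp add: kone_def)
  qed
  have "emeasure lborel S * ennreal (a^(DIM('a)+1)/(DIM('a)+1)) \<le> emeasure lborel (kone S)"
  proof -
    have "emeasure lborel (kone0 S a) \<le> emeasure lborel (kone S)"
      by (rule emeasure_mono[OF sub]) (simp add: coneSb)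
    then show ?thesis using slice_int[OF Sb a] by simp
  qed
  then have ineq: "emeasure lebesgue M * ennreal (a^(DIM('a)+1)/(DIM('a)+1)) \<le> emeasure lebesgue (kone M)"
    using em eM by simp
  have "bounded M" unfolding bounded_iff using Mb by blast
  then have "M \<in> lmeasurable" using assms(2) by (rule bounded_set_imp_lmeasurable)
  then have eM': "emeasure lebesgue M = ennreal (measure lebesgue M)"
    by (rule emeasure_eq_ennreal_measure[OF fmeasurableD2])
  have "kone M \<subseteq> cball 0 1" by (auto simp: kone_def mem_cball_0)
  then have "bounded (kone M)" by (rule bounded_subset[OF bounded_cball])
  then have "kone M \<in> lmeasurable" using coneM by (rule bounded_set_imp_lmeasurable)
  then have eC: "emeasure lebesgue (kone M) = ennreal (measure lebesgue (kone M))"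
    by (rule emeasure_eq_ennreal_measure[OF fmeasurableD2])
  have "ennreal (measure lebesgue M * (a^(DIM('a)+1)/(DIM('a)+1))) \<le> ennreal (measure lebesgue (kone M))"
  proof -
    have "ennreal (measure lebesgue M * (a^(DIM('a)+1)/(DIM('a)+1))) = ennreal (measure lebesgue M) * ennreal (a^(DIM('a)+1)/(DIM('a)+1))"
      by (rule ennreal_mult) (use a in auto)
    then show ?thesis using ineq unfolding eM' eC by simp
  qed
  then have key: "measure lebesgue M * (a^(DIM('a)+1)/(DIM('a)+1)) \<le> measure lebesgue (kone M)"
    by (rule iffD1[OF ennreal_le_iff[OF measure_nonneg]])
  have pw: "(R + 1) powi (- int (DIM('a) + 1)) = a^(DIM('a)+1)"
  proof -
    have "(R + 1) powi (- int (DIM('a) + 1)) = inverse ((R + 1) powi (int (DIM('a) + 1)))"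
      by (rule power_int_minus)
    also have "\<dots> = inverse ((R + 1) ^ (DIM('a) + 1))"
      by (simp only: power_int_of_nat)
    also have "\<dots> = a ^ (DIM('a) + 1)"
      by (simp add: a_def power_one_over inverse_eq_divide)
    finally show ?thesis .
  qed
  have "sphere_surface_measure (Phi ` M) = (DIM('a)+1) * measure lebesgue (kone M)"
    unfolding sphere_surface_measure_def sphere_cone_eq by simp
  moreover have "(DIM('a)+1) * (measure lebesgue M * (a^(DIM('a)+1)/(DIM('a)+1))) = a^(DIM('a)+1) * measure lebesgue M"
    by simp
  moreover have "(DIM('a)+1) * (measure lebesgue M * (a^(DIM('a)+1)/(DIM('a)+1))) \<le> (DIM('a)+1) * measure lebesgue (kone M)"
    using key by (rule mult_left_mono) simp
  ultimately show ?thesis using pw by (simp add: mult.commute)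
qed

end
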